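(* Let $A=(a_{ij})$ be a real $n\times n$ matrix with nonnegative entries, let $\mathbf 1=(1,\ldots,1)^{\mathrm T}\in\mathbb R^n$, and let $L=\operatorname{diag}(A\mathbf 1)-A$. Consider the system $\dot x(t)=-L\,x(t)$, $x(t)\in\mathbb R^n$. Let $\mathcal T(L)$ be the set of initial vectors $x(0)\in\mathbb R^n$ for which $\lim_{t\to\infty}x(t)$ is a vector all of whose components are equal. Then $\mathcal T(L)=\mathcal R(L)\oplus\operatorname{span}(\mathbf 1)$, where $\mathcal R(L)$ is the range (column space) of $L$.
   Context: $\mathcal T(L)$ is called the consensus domain of the algorithm $\dot x=-Lx$. The matrix $L$ is the Laplacian matrix of the algorithm; it has zero row sums. *)

theory Defs
  imports "HOL-Analysis.Analysis"
begin

text \<open>The all-ones vector.\<close>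
definition ones :: "real ^ 'n" where
  "ones = (\<chi> i. 1)"

text \<open>Laplacian L = diag(A 1) - A.\<close>
definition laplacian :: "real ^ 'n ^ 'n \<Rightarrow> real ^ 'n ^ 'n" where
  "laplacian A = (\<chi> i j. (if i = j then (\<Sum>k\<in>UNIV. A $ i $ k) else 0) - A $ i $ j)"

text \<open>A solution of x'(t) = - L x(t) on [0,\<infinity>) with initial value x0.\<close>
definition is_solution :: "real ^ 'n ^ 'n \<Rightarrow> real ^ 'n \<Rightarrow> (real \<Rightarrow> real ^ 'n) \<Rightarrow> bool" where
  "is_solution L x0 x \<longleftrightarrow> x 0 = x0 \<and>
     (\<forall>t\<ge>0. (x has_vector_derivative (- (L *v x t))) (at t within {0..}))"

text \<open>Consensus domain T(L): initial vectors whose trajectory converges to a vector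
  with all components equal.\<close>
definition consensus_domain :: "real ^ 'n ^ 'n \<Rightarrow> (real ^ 'n) set" where
  "consensus_domain L = {x0. \<exists>x. is_solution L x0 x \<and>
      (\<exists>c::real. (x \<longlongrightarrow> c *\<^sub>R ones) at_top)}"

end

theory Submission
  imports Defs
begin


lemma lap_apply:
  "(laplacian A *v y) $ i = (\<Sum>j\<in>UNIV. A$i$j * (y$i - y$j))"
proof -
  have "(laplacian A *v y) $ i = (\<Sum>j\<in>UNIV. ((if i = j then (\<Sum>k\<in>UNIV. A $ i $ k) else 0) - A $ i $ j) * y$j)"
    by (simp add: matrix_vector_mult_def laplacian_def)
  also have "\<dots> = (\<Sum>j\<in>UNIV. (if i = j then (\<Sum>k\<in>UNIV. A $ i $ k) * y$j else 0)) - (\<Sum>j\<in>UNIV. A$i$j * y$j)"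
    by (subst sum_subtractf[symmetric], rule sum.cong) (auto simp: algebra_simps)
  also have "\<dots> = (\<Sum>k\<in>UNIV. A $ i $ k) * y$i - (\<Sum>j\<in>UNIV. A$i$j * y$j)"
    by simp
  also have "\<dots> = (\<Sum>j\<in>UNIV. A$i$j * (y$i - y$j))"
    by (simp add: right_diff_distrib sum_subtractf sum_distrib_right)
  finally show ?thesis .
qed

lemma range_inter:
  fixes A :: "real ^ 'n ^ 'n"
  assumes nn: "\<forall>i j. A $ i $ j \<ge> 0"
  shows "range (\<lambda>y. laplacian A *v y) \<inter> span {ones} = {0}"
proof -
  { fix y :: "real^'n" and c :: real
    assume h: "laplacian A *v y = c *\<^sub>R ones"
    have fin: "finite (range (\<lambda>j. y$j))" "range (\<lambda>j. y$j) \<noteq> {}" by auto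
    obtain m where m: "y$m = Min (range (\<lambda>j. y$j))" using Min_in[OF fin] by (metis imageE)
    obtain M where M: "y$M = Max (range (\<lambda>j. y$j))" using Max_in[OF fin] by (metis imageE)
    have "c = (laplacian A *v y) $ m" using h by (simp add: ones_def)
    also have "\<dots> = (\<Sum>j\<in>UNIV. A$m$j * (y$m - y$j))" by (rule lap_apply)
    also have "\<dots> \<le> 0"
      by (intro sum_nonpos mult_nonneg_nonpos) (auto simp: nn m)
    finally have c1: "c \<le> 0" .
    have "c = (laplacian A *v y) $ M" using h by (simp add: ones_def)
    also have "\<dots> = (\<Sum>j\<in>UNIV. A$M$j * (y$M - y$j))" by (rule lap_apply)
    also have "\<dots> \<ge> 0"
      by (intro sum_nonneg mult_nonneg_nonneg) (auto simp: nn M)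
    finally have "c \<ge> 0" .
    with c1 have "c = 0" by simp }
  moreover have "0 \<in> range (\<lambda>y. laplacian A *v y)" by (metis matrix_vector_mult_0_right rangeI)
  ultimately show ?thesis
    by (auto simp: span_singleton span_zero)
qed



definition dd :: "real^'n^'n \<Rightarrow> real" where "dd A = 1 + (\<Sum>i\<in>UNIV. \<Sum>k\<in>UNIV. A$i$k)"
definition QQ :: "real^'n^'n \<Rightarrow> real^'n^'n" where
  "QQ A = (\<chi> i j. (if i = j then 1 else 0) - laplacian A $ i $ j / dd A)"
definition pw :: "real^'n^'n \<Rightarrow> nat \<Rightarrow> real^'n \<Rightarrow> real^'n" where
  "pw A n v = ((\<lambda>w. QQ A *v w) ^^ n) v"

context
  fixes A :: "real^'n^'n"
  assumes nn: "\<forall>i j. A $ i $ j \<ge> 0"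
begin

lemma rowsum_le: "(\<Sum>k\<in>UNIV. A$i$k) \<le> dd A - 1"
proof -
  have "(\<Sum>k\<in>UNIV. A$i$k) \<le> (\<Sum>i\<in>UNIV. \<Sum>k\<in>UNIV. A$i$k)"
    by (rule member_le_sum) (auto intro: sum_nonneg simp: nn)
  then show ?thesis by (simp add: dd_def)
qed

lemma dd_pos: "dd A \<ge> 1"
  unfolding dd_def by (auto intro!: sum_nonneg simp: nn)

lemma QQ_nonneg: "QQ A $ i $ j \<ge> 0"
proof (cases "i = j")
  case True
  have "A$i$i \<le> (\<Sum>k\<in>UNIV. A$i$k)"
    by (rule member_le_sum) (auto simp: nn)
  then have "(\<Sum>k\<in>UNIV. A$i$k) - A$i$i \<le> dd A"
    using rowsum_le[of i] nn by (smt (verit))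
  then have "((\<Sum>k\<in>UNIV. A$i$k) - A$i$i) / dd A \<le> 1"
    using dd_pos by (simp add: divide_le_eq)
  then show ?thesis using True by (simp add: QQ_def laplacian_def)
next
  case False
  then show ?thesis using nn dd_pos by (simp add: QQ_def laplacian_def)
qed

lemma QQ_apply: "(QQ A *v v) $ i = v $ i - (laplacian A *v v) $ i / dd A"
proof -
  have "(QQ A *v v) $ i = (\<Sum>j\<in>UNIV. (if i = j then v $ j else 0) - laplacian A $ i $ j * v $ j / dd A)"
    by (simp add: QQ_def matrix_vector_mult_def, rule sum.cong) (auto simp: algebra_simps)
  also have "\<dots> = v $ i - (\<Sum>j\<in>UNIV. laplacian A $ i $ j * v $ j) / dd A"
    by (simp add: sum_subtractf sum_divide_distrib)
  finally show ?thesis by (simp add: matrix_vector_mult_def)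
qed

lemma lap_Q: "laplacian A *v v = dd A *\<^sub>R (v - QQ A *v v)"
  using dd_pos by (simp add: vec_eq_iff QQ_apply)

lemma QQ_bound: assumes "\<And>j. \<bar>v $ j\<bar> \<le> B" shows "\<bar>(QQ A *v v) $ i\<bar> \<le> B"
proof -
  have rs: "(\<Sum>j\<in>UNIV. QQ A $ i $ j) = 1"
  proof -
    have "(\<Sum>j\<in>UNIV. QQ A $ i $ j) = (QQ A *v ones) $ i"
      by (simp add: matrix_vector_mult_def ones_def)
    also have "\<dots> = 1" by (simp add: QQ_apply lap_apply ones_def)
    finally show ?thesis .
  qed
  have "\<bar>(QQ A *v v) $ i\<bar> = \<bar>\<Sum>j\<in>UNIV. QQ A $ i $ j * v $ j\<bar>"
    by (simp add: matrix_vector_mult_def)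
  also have "\<dots> \<le> (\<Sum>j\<in>UNIV. QQ A $ i $ j * B)"
    by (rule order_trans[OF sum_abs]) (auto intro!: sum_mono mult_left_mono simp: abs_mult QQ_nonneg assms)
  also have "\<dots> = B" by (simp add: sum_distrib_right[symmetric] rs)
  finally show ?thesis .
qed

lemma pw_bound: assumes "\<And>j. \<bar>v $ j\<bar> \<le> B" shows "\<bar>pw A n v $ i\<bar> \<le> B"
  using assms
proof (induction n arbitrary: i)
  case 0 then show ?case by (simp add: pw_def)
next
  case (Suc n) then show ?case by (simp add: pw_def QQ_bound)
qed

lemma pw_ones: "pw A n ones = ones"
proof (induction n)
  case 0 then show ?case by (simp add: pw_def)
next
  case (Suc n)
  have "QQ A *v ones = ones" by (simp add: vec_eq_iff QQ_apply lap_apply ones_def)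
  with Suc show ?case by (simp add: pw_def)
qed

lemma pw_lin: "pw A n (u + c *\<^sub>R w) = pw A n u + c *\<^sub>R pw A n w"
  by (induction n) (auto simp: pw_def matrix_vector_right_distrib matrix_vector_mult_scaleR)

lemma pw_Suc: "pw A (Suc n) v = pw A n (QQ A *v v)"
  by (simp add: pw_def funpow_Suc_right del: funpow.simps)

lemma pw_Suc': "pw A (Suc n) v = QQ A *v pw A n v"
  by (simp add: pw_def)

end


lemma exp_sums_real: "(\<lambda>n. (x::real)^n / fact n) sums exp x"
  using exp_converges[of x] by (simp add: divide_inverse mult.commute)

lemma mom1: "(\<lambda>n. real n * ((x::real)^n / fact n)) sums (x * exp x)"
proof -
  have "(\<lambda>m. real (Suc m) * (x^(Suc m) / fact (Suc m))) = (\<lambda>m. x * (x^m / fact m))"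
  proof (rule ext)
    fix m
    have f: "(fact (Suc m)::real) = real (Suc m) * fact m" by simp
    have "real (Suc m) \<noteq> 0" by simp
    then show "real (Suc m) * (x^(Suc m) / fact (Suc m)) = x * (x^m / fact m)"
      unfolding f by (simp add: field_simps del: of_nat_Suc)
  qed
  moreover have "(\<lambda>m. x * (x^m / fact m)) sums (x * exp x)"
    by (rule sums_mult[OF exp_sums_real])
  ultimately have "(\<lambda>m. real (Suc m) * (x^(Suc m) / fact (Suc m))) sums (x * exp x)" by simp
  then show ?thesis by (subst (asm) sums_Suc_iff) simp
qed

lemma mom2: "(\<lambda>n. (real n)^2 * ((x::real)^n / fact n)) sums (x * (x * exp x + exp x))"
proof -
  have "(\<lambda>m. (real (Suc m))^2 * (x^(Suc m) / fact (Suc m))) = (\<lambda>m. x * (real m * (x^m / fact m) + x^m / fact m))"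
  proof (rule ext)
    fix m
    have f: "(fact (Suc m)::real) = real (Suc m) * fact m" by simp
    have "real (Suc m) \<noteq> 0" by simp
    then show "(real (Suc m))^2 * (x^(Suc m) / fact (Suc m)) = x * (real m * (x^m / fact m) + x^m / fact m)"
      unfolding f by (simp add: field_simps power2_eq_square del: of_nat_Suc) (simp add: algebra_simps)
  qed
  moreover have "(\<lambda>m. x * (real m * (x^m / fact m) + x^m / fact m)) sums (x * (x * exp x + exp x))"
    by (rule sums_mult[OF sums_add[OF mom1 exp_sums_real]])
  ultimately have "(\<lambda>m. (real (Suc m))^2 * (x^(Suc m) / fact (Suc m))) sums (x * (x * exp x + exp x))" by simp
  then show ?thesis by (subst (asm) sums_Suc_iff) simp
qed

lemma abs_le_sq: fixes x e :: real assumes "e > 0" shows "\<bar>x\<bar> \<le> e/2 + x^2/(2*e)"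
proof -
  have "0 \<le> (\<bar>x\<bar> - e)^2" by simp
  then have "2*e*\<bar>x\<bar> \<le> x^2 + e^2" by (simp add: power2_eq_square algebra_simps)
  then show ?thesis using assms by (simp add: field_simps power2_eq_square)
qed

lemma poisson_bound:
  fixes a :: "nat \<Rightarrow> real" and s B :: real
  assumes s: "s > 0" and aB: "\<And>n. \<bar>a n\<bar> \<le> B"
  shows "(\<lambda>n. s^n / fact n * (a n - a (Suc n))) sums (\<Sum>n. s^n / fact n * (a n - a (Suc n)))"
    and "\<bar>\<Sum>n. s^n / fact n * (a n - a (Suc n))\<bar> \<le> B * exp s / sqrt s"
proof -
  define p where "p n = s^n / fact n" for n
  define q where "q n = real n / s * p n" for n
  have p0: "p n \<ge> 0" for n using s by (simp add: p_def)
  have B0: "B \<ge> 0" using aB[of 0] by simp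
  have ps: "p sums exp s" unfolding p_def by (rule exp_sums_real)
  have p1: "(\<lambda>n. real n * p n) sums (s * exp s)" unfolding p_def by (rule mom1)
  have p2: "(\<lambda>n. (real n)^2 * p n) sums (s * (s * exp s + exp s))" unfolding p_def by (rule mom2)
  have pa: "p n * \<bar>a n\<bar> \<le> B * p n" for n
    using mult_left_mono[OF aB[of n] p0[of n]] by (simp add: mult.commute)
  have sum_pa: "summable (\<lambda>n. p n * a n)"
    by (rule summable_comparison_test[where g="\<lambda>n. B * p n"])
       (use pa p0 in \<open>auto intro!: exI[of _ 0] summable_mult sums_summable[OF ps] simp: abs_mult\<close>)
  have sum_qa: "summable (\<lambda>n. q n * a n)"
  proof (rule summable_comparison_test[where g="\<lambda>n. B / s * (real n * p n)"])
    show "\<exists>N. \<forall>n\<ge>N. norm (q n * a n) \<le> B / s * (real n * p n)"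
    proof (intro exI[of _ 0] allI impI)
      fix n :: nat
      have "real n * (p n * \<bar>a n\<bar>) \<le> real n * (B * p n)" by (rule mult_left_mono[OF pa]) simp
      then show "norm (q n * a n) \<le> B / s * (real n * p n)"
        using s p0[of n] by (simp add: q_def abs_mult field_simps)
    qed
    show "summable (\<lambda>n. B / s * (real n * p n))" by (rule summable_mult[OF sums_summable[OF p1]])
  qed
  have qS: "q (Suc n) = p n" for n
  proof -
    have f: "(fact (Suc n)::real) = real (Suc n) * fact n" by simp
    have "real (Suc n) \<noteq> 0" by simp
    then show ?thesis using s unfolding q_def p_def f by (simp add: field_simps del: of_nat_Suc)
  qed
  have "(\<lambda>n. q (Suc n) * a (Suc n)) sums (\<Sum>n. q n * a n)"
    using summable_sums[OF sum_qa] by (subst sums_Suc_iff) (simp add: q_def)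
  then have pas: "(\<lambda>n. p n * a (Suc n)) sums (\<Sum>n. q n * a n)" by (simp add: qS)
  have T: "(\<lambda>n. p n * (a n - a (Suc n))) sums ((\<Sum>n. p n * a n) - (\<Sum>n. q n * a n))"
    using sums_diff[OF summable_sums[OF sum_pa] pas] by (simp add: algebra_simps)
  then show "(\<lambda>n. s^n / fact n * (a n - a (Suc n))) sums (\<Sum>n. s^n / fact n * (a n - a (Suc n)))"
    using summable_sums[OF sums_summable[OF T]] by (simp add: p_def)
  have Teq: "(\<Sum>n. s^n / fact n * (a n - a (Suc n))) = (\<Sum>n. (p n - q n) * a n)"
  proof -
    have "(\<Sum>n. s^n / fact n * (a n - a (Suc n))) = (\<Sum>n. p n * a n) - (\<Sum>n. q n * a n)"
      using sums_unique[OF T] by (simp add: p_def)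
    also have "\<dots> = (\<Sum>n. (p n - q n) * a n)"
      using suminf_diff[OF sum_pa sum_qa] by (simp add: algebra_simps)
    finally show ?thesis .
  qed
  define e where "e = 1 / sqrt s"
  have e0: "e > 0" using s by (simp add: e_def)
  define h where "h n = B * p n * (e/2 + (1 - real n / s)^2 / (2*e))" for n
  have hdec: "h n = (B*(e/2 + 1/(2*e))) * p n + (-(B/(e * s))) * (real n * p n) + (B/(2*e * s^2)) * ((real n)^2 * p n)" for n
    using s e0 by (simp add: h_def field_simps power2_eq_square)
  have hs: "h sums ((B*(e/2 + 1/(2*e))) * exp s + (-(B/(e * s))) * (s * exp s) + (B/(2*e * s^2)) * (s * (s * exp s + exp s)))"
    unfolding hdec by (intro sums_add sums_mult ps p1 p2)
  have hval: "(B*(e/2 + 1/(2*e))) * exp s + (-(B/(e * s))) * (s * exp s) + (B/(2*e * s^2)) * (s * (s * exp s + exp s))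
      = B * exp s * (e/2 + 1/(2*e * s))"
    using s e0 by (simp add: field_simps power2_eq_square)
  have "e/2 + 1/(2*e * s) = 1 / sqrt s"
  proof -
    have "sqrt s * sqrt s = s" using s by simp
    then show ?thesis using s unfolding e_def by (simp add: field_simps)
  qed
  with hval have hval': "suminf h = B * exp s / sqrt s" using sums_unique[OF hs] by simp
  have pt: "norm ((p n - q n) * a n) \<le> h n" for n
  proof -
    have "p n - q n = p n * (1 - real n / s)" by (simp add: q_def algebra_simps)
    then have "norm ((p n - q n) * a n) = p n * \<bar>1 - real n / s\<bar> * \<bar>a n\<bar>"
      using p0[of n] by (simp add: abs_mult)
    also have "\<dots> \<le> p n * (e/2 + (1 - real n / s)^2 / (2*e)) * B"
      by (intro mult_mono mult_left_mono abs_le_sq e0 aB p0 mult_nonneg_nonneg) (use e0 in auto)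
    finally show ?thesis by (simp add: h_def mult_ac)
  qed
  have "\<bar>\<Sum>n. (p n - q n) * a n\<bar> \<le> suminf h"
    using norm_suminf_le[OF pt sums_summable[OF hs]] by simp
  then show "\<bar>\<Sum>n. s^n / fact n * (a n - a (Suc n))\<bar> \<le> B * exp s / sqrt s"
    using Teq hval' by simp
qed



definition GG :: "real^'n^'n \<Rightarrow> real^'n \<Rightarrow> real \<Rightarrow> real^'n" where
  "GG A v s = (\<chi> i. \<Sum>n. (pw A n v $ i / fact n) * s^n)"
definition sol :: "real^'n^'n \<Rightarrow> real^'n \<Rightarrow> real \<Rightarrow> real^'n" where
  "sol A v t = exp (-(dd A * t)) *\<^sub>R GG A v (dd A * t)"

lemma vec_has_vector_derivative:
  fixes f :: "real \<Rightarrow> real^'n"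
  assumes "\<And>i. ((\<lambda>t. f t $ i) has_real_derivative (D $ i)) (at t within S)"
  shows "(f has_vector_derivative D) (at t within S)"
  unfolding has_vector_derivative_def
proof (subst has_derivative_componentwise_within, intro ballI)
  fix b :: "real^'n" assume "b \<in> Basis"
  then obtain i where b: "b = axis i 1" by (auto simp: Basis_vec_def)
  show "((\<lambda>x. f x \<bullet> b) has_derivative (\<lambda>x. x *\<^sub>R D \<bullet> b)) (at t within S)"
    using assms[of i, unfolded has_real_derivative_iff_has_vector_derivative has_vector_derivative_def]
    unfolding b by (simp add: cart_eq_inner_axis[symmetric])
qed

context
  fixes A :: "real^'n^'n"
  assumes nn: "\<forall>i j. A $ i $ j \<ge> 0"
begin

lemma coeff_summable: "summable (\<lambda>n. (pw A n v $ i / fact n) * y^n)"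
proof -
  define B where "B = (\<Sum>j\<in>UNIV. \<bar>v $ j\<bar>)"
  have vB: "\<bar>v $ j\<bar> \<le> B" for j unfolding B_def
    by (rule member_le_sum[of j UNIV "\<lambda>j. \<bar>v $ j\<bar>"]) auto
  show ?thesis
  proof (rule summable_comparison_test[where g="\<lambda>n. B * (\<bar>y\<bar>^n / fact n)"])
    show "summable (\<lambda>n. B * (\<bar>y\<bar>^n / fact n))"
      by (rule summable_mult[OF sums_summable[OF exp_sums_real]])
    show "\<exists>N. \<forall>n\<ge>N. norm (pw A n v $ i / fact n * y ^ n) \<le> B * (\<bar>y\<bar> ^ n / fact n)"
    proof (intro exI[of _ 0] allI impI)
      fix n :: nat
      have "\<bar>pw A n v $ i\<bar> * \<bar>y\<bar>^n \<le> B * \<bar>y\<bar>^n"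
        by (rule mult_right_mono[OF pw_bound[OF nn vB]]) simp
      then show "norm (pw A n v $ i / fact n * y ^ n) \<le> B * (\<bar>y\<bar> ^ n / fact n)"
        by (simp add: abs_mult power_abs divide_right_mono)
    qed
  qed
qed

lemma GG_deriv: "((\<lambda>s. GG A v s $ i) has_real_derivative (QQ A *v GG A v s) $ i) (at s)"
proof -
  define c where "c n = pw A n v $ i / fact n" for n
  have d: "((\<lambda>s. \<Sum>n. c n * s^n) has_real_derivative (\<Sum>n. diffs c n * s^n)) (at s)"
    by (rule termdiffs_strong_converges_everywhere) (unfold c_def, rule coeff_summable)
  have dc: "diffs c n = (\<Sum>j\<in>UNIV. QQ A $ i $ j * (pw A n v $ j / fact n))" for n
  proof -
    have f: "(fact (Suc n)::real) = real (Suc n) * fact n" by simp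
    have "real (Suc n) \<noteq> 0" by simp
    then have "diffs c n = pw A (Suc n) v $ i / fact n"
      unfolding diffs_def c_def f by (simp del: of_nat_Suc)
    also have "\<dots> = (\<Sum>j\<in>UNIV. QQ A $ i $ j * (pw A n v $ j / fact n))"
      by (simp add: pw_Suc'[OF nn] matrix_vector_mult_def sum_divide_distrib)
    finally show ?thesis .
  qed
  have "(\<Sum>n. diffs c n * s^n) = (\<Sum>n. \<Sum>j\<in>UNIV. QQ A $ i $ j * ((pw A n v $ j / fact n) * s^n))"
    unfolding dc sum_distrib_right by (simp only: mult_ac)
  also have "\<dots> = (\<Sum>j\<in>UNIV. \<Sum>n. QQ A $ i $ j * ((pw A n v $ j / fact n) * s^n))"
    by (rule suminf_sum) (intro summable_mult coeff_summable)
  also have "\<dots> = (\<Sum>j\<in>UNIV. QQ A $ i $ j * (\<Sum>n. (pw A n v $ j / fact n) * s^n))"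
    by (rule sum.cong[OF refl], rule suminf_mult[OF coeff_summable])
  also have "\<dots> = (QQ A *v GG A v s) $ i"
    by (simp add: GG_def matrix_vector_mult_def)
  finally show ?thesis using d by (simp add: GG_def c_def)
qed

lemma GG_0: "GG A v 0 = v"
proof -
  have "(\<Sum>n. (pw A n v $ i / fact n) * 0^n) = pw A 0 v $ i / fact 0" for i
    by (rule powser_zero)
  then show ?thesis by (simp add: GG_def vec_eq_iff pw_def)
qed

lemma sol_is_solution: "is_solution (laplacian A) v (sol A v)"
  unfolding is_solution_def
proof (intro conjI allI impI)
  show "sol A v 0 = v" by (simp add: sol_def GG_0)
  fix t :: real
  let ?d = "dd A"
  show "(sol A v has_vector_derivative - (laplacian A *v sol A v t)) (at t within {0..})"
  proof (rule vec_has_vector_derivative)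
    fix i
    have e: "((\<lambda>t. exp (-(?d * t))) has_real_derivative exp (-(?d * t)) * (- ?d)) (at t)"
      by (auto intro!: derivative_eq_intros)
    have g: "((\<lambda>t. GG A v (?d * t) $ i) has_real_derivative (QQ A *v GG A v (?d * t)) $ i * ?d) (at t)"
      by (rule DERIV_chain2[OF GG_deriv]) (auto intro!: derivative_eq_intros)
    have "((\<lambda>t. exp (-(?d * t)) * GG A v (?d * t) $ i) has_real_derivative
       exp (-(?d * t)) * ((QQ A *v GG A v (?d * t)) $ i * ?d) + exp (-(?d * t)) * (- ?d) * GG A v (?d * t) $ i) (at t)"
      by (rule DERIV_mult'[OF e g])
    moreover have "exp (-(?d * t)) * ((QQ A *v GG A v (?d * t)) $ i * ?d) + exp (-(?d * t)) * (- ?d) * GG A v (?d * t) $ i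
        = (- (laplacian A *v sol A v t)) $ i"
      by (simp add: lap_Q[OF nn] sol_def matrix_vector_mult_scaleR algebra_simps)
    ultimately show "((\<lambda>t. sol A v t $ i) has_real_derivative (- (laplacian A *v sol A v t)) $ i) (at t within {0..})"
      by (auto simp: sol_def intro: has_field_derivative_at_within)
  qed
qed

end


lemma lim_aux: assumes "d > 0" shows "((\<lambda>t::real. C / sqrt (d * t)) \<longlongrightarrow> 0) at_top"
proof -
  have "LIM t at_top. d * t :> at_top"
    by (rule filterlim_tendsto_pos_mult_at_top[OF tendsto_const assms filterlim_ident])
  then have "LIM t at_top. sqrt (d * t) :> at_top"
    by (rule filterlim_compose[OF sqrt_at_top])
  then show ?thesis
    by (intro tendsto_divide_0[OF tendsto_const] filterlim_at_top_imp_at_infinity)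
qed

context
  fixes A :: "real^'n^'n"
  assumes nn: "\<forall>i j. A $ i $ j \<ge> 0"
begin

lemma pw_add: "pw A n (u + w) = pw A n u + pw A n w"
  by (induction n) (auto simp: pw_def matrix_vector_right_distrib)

lemma pw_scale: "pw A n (c *\<^sub>R u) = c *\<^sub>R pw A n u"
  by (induction n) (auto simp: pw_def matrix_vector_mult_scaleR)

lemma pw_diff: "pw A n (u - w) = pw A n u - pw A n w"
  using pw_add[of n u "- w"] pw_scale[of n "-1" w] by simp

lemma sol_conv:
  assumes x0: "x0 = laplacian A *v y + c *\<^sub>R ones"
  shows "(sol A x0 \<longlongrightarrow> c *\<^sub>R ones) at_top"
proof (rule vec_tendstoI)
  fix i
  define d where "d = dd A"
  have d0: "d > 0" using dd_pos[OF nn] by (simp add: d_def)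
  define a where "a n = pw A n y $ i" for n
  define B where "B = (\<Sum>j\<in>UNIV. \<bar>y $ j\<bar>)"
  have yB: "\<bar>y $ j\<bar> \<le> B" for j unfolding B_def
    by (rule member_le_sum[of j UNIV "\<lambda>j. \<bar>y $ j\<bar>"]) auto
  have aB: "\<bar>a n\<bar> \<le> B" for n unfolding a_def by (rule pw_bound[OF nn yB])
  have pwx: "pw A n x0 $ i = d * (a n - a (Suc n)) + c" for n
  proof -
    have "pw A n x0 = d *\<^sub>R (pw A n y - pw A (Suc n) y) + c *\<^sub>R ones"
      unfolding x0 lap_Q[OF nn] pw_add pw_scale pw_diff pw_ones[OF nn] pw_Suc[OF nn] d_def ..
    then show ?thesis by (simp add: a_def ones_def)
  qed
  have bound: "\<bar>sol A x0 t $ i - c\<bar> \<le> d * B / sqrt (d * t)" if t: "t > 0" for t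
  proof -
    define s where "s = d * t"
    have s0: "s > 0" using t d0 by (simp add: s_def)
    define S where "S = (\<Sum>n. s^n / fact n * (a n - a (Suc n)))"
    note P = poisson_bound[OF s0 aB]
    have "(\<lambda>n. d * (s^n / fact n * (a n - a (Suc n))) + c * (s^n / fact n)) sums (d * S + c * exp s)"
      by (intro sums_add sums_mult exp_sums_real) (use P(1) in \<open>simp add: S_def\<close>)
    moreover have "(\<lambda>n. d * (s^n / fact n * (a n - a (Suc n))) + c * (s^n / fact n)) = (\<lambda>n. (pw A n x0 $ i / fact n) * s^n)"
      by (rule ext) (simp add: pwx field_simps)
    ultimately have G: "GG A x0 s $ i = d * S + c * exp s"
      by (simp add: GG_def sums_iff)
    have "sol A x0 t = exp (- s) *\<^sub>R GG A x0 s"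
      by (simp add: sol_def s_def d_def)
    then have "sol A x0 t $ i = exp (- s) * (d * S + c * exp s)"
      by (simp add: G)
    also have "\<dots> = d * (exp (-s) * S) + c"
      by (simp add: algebra_simps exp_minus_inverse)
    finally have "\<bar>sol A x0 t $ i - c\<bar> = d * (exp (-s) * \<bar>S\<bar>)"
      using d0 by (simp add: abs_mult)
    also have "\<dots> \<le> d * (exp (-s) * (B * exp s / sqrt s))"
    proof -
      have "\<bar>S\<bar> \<le> B * exp s / sqrt s" unfolding S_def by (rule P(2))
      then show ?thesis using d0 by (intro mult_left_mono) auto
    qed
    also have "\<dots> = d * B / sqrt s"
      by (simp add: exp_minus field_simps)
    finally show ?thesis by (simp add: s_def)
  qed
  have "((\<lambda>t. sol A x0 t $ i - c) \<longlongrightarrow> 0) at_top"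
  proof (rule Lim_null_comparison[OF _ lim_aux[OF d0]])
    show "\<forall>\<^sub>F t in at_top. norm (sol A x0 t $ i - c) \<le> d * B / sqrt (d * t)"
      using bound by (auto intro!: eventually_at_top_linorderI[of 1])
  qed
  then show "((\<lambda>t. sol A x0 t $ i) \<longlongrightarrow> (c *\<^sub>R ones) $ i) at_top"
    by (simp add: ones_def LIM_zero_cancel)
qed

end


lemma cd_sub:
  fixes L :: "real^'n^'n"
  assumes "x0 \<in> consensus_domain L"
  shows "\<exists>u v. x0 = u + v \<and> u \<in> range (\<lambda>y. L *v y) \<and> v \<in> span {ones}"
proof -
  obtain x c where sol: "is_solution L x0 x" and lim: "(x \<longlongrightarrow> c *\<^sub>R ones) at_top"
    using assms unfolding consensus_domain_def by auto
  let ?R = "range (\<lambda>y. L *v y)"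
  have subR: "subspace ?R"
    using linear_subspace_image[OF matrix_vector_mul_linear[of L] subspace_UNIV] by simp
  have spR: "span ?R = ?R" using subR by (simp add: span_eq_iff)
  define v where "v = x0 - c *\<^sub>R ones"
  have "v \<in> ?R"
  proof (rule ccontr)
    assume nv: "v \<notin> ?R"
    have "span ?R \<subset> span (insert v ?R)"
      using nv spR by (metis span_base span_mono subset_insertI insertI1 psubsetI)
    then obtain w where w0: "w \<noteq> 0" and wsp: "w \<in> span (insert v ?R)"
      and worth: "\<And>y. y \<in> span ?R \<Longrightarrow> orthogonal w y"
      by (meson orthogonal_to_subspace_exists_gen)
    from wsp obtain k where k: "w - k *\<^sub>R v \<in> ?R" by (auto simp: span_insert spR)
    have "inner w (w - k *\<^sub>R v) = 0" using worth[of "w - k *\<^sub>R v"] k spR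
      by (simp add: orthogonal_def)
    then have "inner w w = k * inner w v" by (simp add: inner_diff_right)
    with w0 have wv: "inner w v \<noteq> 0" by auto
    have der: "((\<lambda>t. inner w (x t)) has_vector_derivative 0) (at t within {0..})" if "t \<in> {0..}" for t
    proof -
      have d: "(x has_vector_derivative (- (L *v x t))) (at t within {0..})"
        using sol that unfolding is_solution_def by auto
      have mneg: "L *v (- x t) = - (L *v x t)"
        using linear_neg[OF matrix_vector_mul_linear] by blast
      have "inner w (- (L *v x t)) = 0"
        using worth[of "L *v (- x t)"] spR by (metis (mono_tags, lifting) mneg orthogonal_def rangeI inner_minus_right neg_equal_0_iff_equal)
      then show ?thesis
        using bounded_linear.has_vector_derivative[OF bounded_linear_inner_right d, of w] by simp
    qed
    obtain cc where cc: "\<And>t. t \<in> {0..} \<Longrightarrow> inner w (x t) = cc"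
      by (rule has_vector_derivative_zero_constant[of "{0::real..}"]) (use der in auto)
    have x0: "x 0 = x0" using sol unfolding is_solution_def by auto
    have "cc = inner w x0" using cc[of 0] x0 by simp
    have ev: "eventually (\<lambda>t. inner w (x t) = inner w x0) at_top"
      using cc \<open>cc = inner w x0\<close> by (auto intro!: eventually_at_top_linorderI[of 0])
    have l1: "((\<lambda>t. inner w (x t)) \<longlongrightarrow> inner w (c *\<^sub>R ones)) at_top"
      by (intro tendsto_intros lim)
    have l2: "((\<lambda>t. inner w (x t)) \<longlongrightarrow> inner w x0) at_top"
      using tendsto_eventually[OF ev] .
    have "inner w x0 = inner w (c *\<^sub>R ones)"
      using tendsto_unique[OF trivial_limit_at_top_linorder l2 l1] by simp
    then have "inner w v = 0" by (simp add: v_def inner_diff_right)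
    with wv show False by simp
  qed
  moreover have "c *\<^sub>R ones \<in> span {ones}" by (simp add: span_base span_mul)
  ultimately show ?thesis unfolding v_def by (metis diff_add_cancel)
qed


theorem theorem3:
  fixes A :: "real ^ 'n ^ 'n"
  assumes "\<forall>i j. A $ i $ j \<ge> 0"
  shows "consensus_domain (laplacian A) =
           {u + v | u v. u \<in> range (\<lambda>y. laplacian A *v y) \<and> v \<in> span {ones}}
         \<and> range (\<lambda>y. laplacian A *v y) \<inter> span {ones} = {0}"
proof
  show "range (\<lambda>y. laplacian A *v y) \<inter> span {ones} = {0}"
    by (rule range_inter[OF assms])
  show "consensus_domain (laplacian A) =
           {u + v | u v. u \<in> range (\<lambda>y. laplacian A *v y) \<and> v \<in> span {ones}}"
  proof (rule set_eqI, rule iffI)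
    fix x assume "x \<in> consensus_domain (laplacian A)"
    then show "x \<in> {u + v | u v. u \<in> range (\<lambda>y. laplacian A *v y) \<and> v \<in> span {ones}}"
      using cd_sub by blast
  next
    fix x assume "x \<in> {u + v | u v. u \<in> range (\<lambda>y. laplacian A *v y) \<and> v \<in> span {ones}}"
    then obtain y c where x: "x = laplacian A *v y + c *\<^sub>R ones"
      by (auto simp: span_singleton)
    show "x \<in> consensus_domain (laplacian A)"
      unfolding consensus_domain_def
      using sol_is_solution[OF assms, of x] sol_conv[OF assms x] by blast
  qed
qed

end
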